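(* Let $D,\beta,\delta,\alpha\in\mathbb R$ with $(\beta,D)\neq(0,0)$, and let $\lambda\in\mathbb C$ with $\lambda\notin\sigma_{\mathrm{ess}}$, where $$\sigma_{\mathrm{ess}}=\Big\{\lambda\in\mathbb C:\ \lambda=(\delta\pm i\alpha)-s^2\big(\beta\pm i\tfrac D2\big)\ \text{for some } s\in\mathbb R\Big\}$$ (the two $\pm$ signs taken together). Then the matrix $$\mathbf A_\infty(\lambda)=\begin{bmatrix}\mathbf 0&\mathbf I\\ \mathbf B^{-1}(\lambda\mathbf I-\mathbf N_0)&\mathbf 0\end{bmatrix}\in\mathbb C^{4\times4},\qquad \mathbf B=\begin{bmatrix}\beta&-\frac D2\\ \frac D2&\beta\end{bmatrix},\quad \mathbf N_0=\begin{bmatrix}\delta&-\alpha\\ \alpha&\delta\end{bmatrix},$$ has two eigenvalues with positive real part and two eigenvalues with negative real part.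
   Context: Here $\mathbf I$ and $\mathbf 0$ denote the $2\times2$ identity and zero matrices. The set $\sigma_{\mathrm{ess}}$ is the essential spectrum of the operator $\mathbf B\partial_x^2+\mathbf N_0$ obtained as the asymptotic part of the linearization of the cubic-quintic complex Ginzburg–Landau equation about a stationary pulse. *)

theory Defs
  imports "Jordan_Normal_Form.Jordan_Normal_Form" "Jordan_Normal_Form.Gauss_Jordan_Elimination"
begin

definition Bmat :: "real \<Rightarrow> real \<Rightarrow> complex mat" where
  "Bmat \<beta> D = mat_of_rows_list 2
     [[complex_of_real \<beta>, - complex_of_real (D/2)],
      [complex_of_real (D/2), complex_of_real \<beta>]]"

definition N0mat :: "real \<Rightarrow> real \<Rightarrow> complex mat" where
  "N0mat \<delta> \<alpha> = mat_of_rows_list 2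
     [[complex_of_real \<delta>, - complex_of_real \<alpha>],
      [complex_of_real \<alpha>, complex_of_real \<delta>]]"

definition A_inf :: "real \<Rightarrow> real \<Rightarrow> real \<Rightarrow> real \<Rightarrow> complex \<Rightarrow> complex mat" where
  "A_inf D \<beta> \<delta> \<alpha> lam = four_block_mat
     (0\<^sub>m 2 2) (1\<^sub>m 2)
     (the (mat_inverse (Bmat \<beta> D)) * (lam \<cdot>\<^sub>m 1\<^sub>m 2 - N0mat \<delta> \<alpha>)) (0\<^sub>m 2 2)"

definition sigma_ess :: "real \<Rightarrow> real \<Rightarrow> real \<Rightarrow> real \<Rightarrow> complex set" where
  "sigma_ess D \<beta> \<delta> \<alpha> = {lam. \<exists>s::real.
      lam = Complex \<delta> \<alpha> - complex_of_real (s^2) * Complex \<beta> (D/2) \<or>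
      lam = Complex \<delta> (-\<alpha>) - complex_of_real (s^2) * Complex \<beta> (-D/2)}"

end

theory Submission
  imports Defs
begin

abbreviation m2 :: "'a \<Rightarrow> 'a \<Rightarrow> 'a \<Rightarrow> 'a \<Rightarrow> 'a mat" where
  "m2 a b c d \<equiv> mat_of_rows_list 2 [[a,b],[c,d]]"

lemma m2_carrier: "m2 a b c d \<in> carrier_mat 2 2"
  by (simp add: mat_of_rows_list_def numeral_2_eq_2)

lemma m2_idx: "m2 a b c d $$ (0,0) = a" "m2 a b c d $$ (0,1) = b"
   "m2 a b c d $$ (1,0) = c" "m2 a b c d $$ (1,1) = d"
  by (simp_all add: mat_of_rows_list_def)

lemma mat2_eqI: assumes "A \<in> carrier_mat 2 2"
  shows "A = m2 (A$$(0,0)) (A$$(0,1)) (A$$(1,0)) (A$$(1,1))"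
  apply (rule eq_matI) using assms by (auto simp: mat_of_rows_list_def numeral_2_eq_2 less_Suc_eq)

lemma m2_mult: "m2 a b c d * m2 e f g h = (m2 (a*e+b*g) (a*f+b*h) (c*e+d*g) (c*f+d*h) :: 'a::comm_ring_1 mat)"
  apply (rule eq_matI)
  by (auto simp: mat_of_rows_list_def numeral_2_eq_2 less_Suc_eq scalar_prod_def row_def col_def)

lemma det1: "det (mat (Suc 0) (Suc 0) f) = f (0,0)"
  by (subst det_single, auto)

lemma m2_det: "det (m2 a b c d) = (a*d - b*c :: 'a::comm_ring_1)"
proof -
  have c1: "mat_delete (m2 a b c d) 0 j \<in> carrier_mat 1 1" for j
    using mat_delete_carrier[OF m2_carrier[of a b c d], where i=0 and j=j] by simp
  show ?thesis
  apply (subst laplace_expansion_row[of _ 2 0])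
    apply (rule m2_carrier)
   apply simp
  apply (simp add: cofactor_def numeral_2_eq_2 lessThan_Suc det_single[OF c1])
  apply (simp add: mat_delete_def mat_of_rows_list_def det1)
  done
qed

lemma m2_one: "(1\<^sub>m 2 :: 'a::comm_ring_1 mat) = m2 1 0 0 1"
  apply (rule eq_matI) by (auto simp: mat_of_rows_list_def numeral_2_eq_2 less_Suc_eq)

lemma m2_smult: "x \<cdot>\<^sub>m m2 a b c d = (m2 (x*a) (x*b) (x*c) (x*d) :: 'a::comm_ring_1 mat)"
  apply (rule eq_matI) by (auto simp: mat_of_rows_list_def numeral_2_eq_2 less_Suc_eq)

lemma m2_minus: "m2 a b c d - m2 e f g h = (m2 (a-e) (b-f) (c-g) (d-h) :: 'a::comm_ring_1 mat)"
  apply (rule eq_matI) by (auto simp: mat_of_rows_list_def numeral_2_eq_2 less_Suc_eq)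

lemma m2_map: "map_mat F (m2 a b c d) = m2 (F a) (F b) (F c) (F d)"
  apply (rule eq_matI) by (auto simp: mat_of_rows_list_def numeral_2_eq_2 less_Suc_eq)


lemma m2_eq: "a=e \<Longrightarrow> b=f \<Longrightarrow> c=g \<Longrightarrow> d=h \<Longrightarrow> m2 a b c d = m2 e f g h" by simp

lemma M_lemma: fixes b h l dl a d :: complex assumes d0: "d \<noteq> 0"
  shows "m2 (b/d) (h/d) (-h/d) (b/d) * (l \<cdot>\<^sub>m m2 1 0 0 1 - m2 dl (-a) a dl) =
    m2 ((b*(l-dl) - h*a)/d) (- (- (b*a + h*(l-dl))/d)) (- (b*a + h*(l-dl))/d) ((b*(l-dl) - h*a)/d)"
  unfolding m2_smult m2_minus m2_mult
  apply (rule m2_eq) using d0 by (simp_all add: field_simps)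

lemma B_lemma: fixes b h d :: complex assumes d0: "d \<noteq> 0" and dd: "d = b*b + h*h"
  shows "m2 b (-h) h b * m2 (b/d) (h/d) (-h/d) (b/d) = m2 1 0 0 1"
    "m2 (b/d) (h/d) (-h/d) (b/d) * m2 b (-h) h b = m2 1 0 0 1"
  unfolding m2_mult
  by (rule m2_eq; use d0 in \<open>simp add: field_simps\<close>; simp add: dd)+

lemma step1:
  fixes D \<beta> \<delta> \<alpha> :: real and lam :: complex
  assumes "(\<beta>, D) \<noteq> (0, 0)"
  defines "d \<equiv> complex_of_real (\<beta>^2 + (D/2)^2)"
  defines "p \<equiv> (of_real \<beta> * (lam - of_real \<delta>) - of_real (D/2) * of_real \<alpha>) / d"
  defines "q \<equiv> - (of_real \<beta> * of_real \<alpha> + of_real (D/2) * (lam - of_real \<delta>)) / d"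
  shows "A_inf D \<beta> \<delta> \<alpha> lam = four_block_mat (0\<^sub>m 2 2) (1\<^sub>m 2) (m2 p (-q) q p) (0\<^sub>m 2 2)"
proof -
  have "\<beta>^2 + (D/2)^2 > 0" using assms(1)
    by (cases "\<beta> = 0") (auto simp: add_pos_nonneg)
  hence d0: "d \<noteq> 0" unfolding d_def by (metis of_real_eq_0_iff order_less_irrefl)
  define Bexp where "Bexp = m2 (of_real \<beta>/d) (of_real (D/2)/d) (-of_real (D/2)/d) (of_real \<beta>/d)"
  have dd: "d = of_real \<beta> * of_real \<beta> + of_real (D/2) * of_real (D/2)" unfolding d_def
    by (simp add: power2_eq_square)
  have BB1: "Bmat \<beta> D * Bexp = 1\<^sub>m 2" unfolding Bmat_def Bexp_def m2_one
    by (rule B_lemma[OF d0 dd])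
  have BB2: "Bexp * Bmat \<beta> D = 1\<^sub>m 2" unfolding Bmat_def Bexp_def m2_one
    by (rule B_lemma[OF d0 dd])
  have Bc: "Bmat \<beta> D \<in> carrier_mat 2 2" unfolding Bmat_def by (rule m2_carrier)
  have Bec: "Bexp \<in> carrier_mat 2 2" unfolding Bexp_def by (rule m2_carrier)
  have "Bmat \<beta> D \<in> Units (ring_mat TYPE(complex) 2 ())"
    using Bc Bec BB1 BB2 by (auto simp: Units_def ring_mat_def)
  then have "mat_inverse (Bmat \<beta> D) \<noteq> None" using mat_inverse(1)[OF Bc, where b="()"] by blast
  then obtain Bi where Bi: "mat_inverse (Bmat \<beta> D) = Some Bi" by auto
  from mat_inverse(2)[OF Bc Bi] have Bi1: "Bi * Bmat \<beta> D = 1\<^sub>m 2" and Bic: "Bi \<in> carrier_mat 2 2" by auto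
  have "Bi = Bi * (Bmat \<beta> D * Bexp)" using Bic by (simp add: BB1)
  also have "\<dots> = (Bi * Bmat \<beta> D) * Bexp" using Bic Bc Bec by (simp add: assoc_mult_mat)
  also have "\<dots> = Bexp" using Bec by (simp add: Bi1)
  finally have BiE: "Bi = Bexp" .
  have M: "Bexp * (lam \<cdot>\<^sub>m 1\<^sub>m 2 - N0mat \<delta> \<alpha>) = m2 p (-q) q p"
    unfolding Bexp_def N0mat_def m2_one p_def q_def by (rule M_lemma[OF d0])
  show ?thesis unfolding A_inf_def Bi BiE using M by simp
qed


lemma step2: fixes p q :: complex
  shows "char_poly (four_block_mat (0\<^sub>m 2 2) (1\<^sub>m 2) (m2 p (-q) q p) (0\<^sub>m 2 2))
     = [:-p,0,1:] * [:-p,0,1:] + [:q:] * [:q:]"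
proof -
  let ?X = "[:0,1:] :: complex poly"
  have cpm: "char_poly_matrix (four_block_mat (0\<^sub>m 2 2) (1\<^sub>m 2) (m2 p (-q) q p) (0\<^sub>m 2 2))
    = four_block_mat (m2 ?X 0 0 ?X) (m2 (-1) 0 0 (-1)) (m2 [:-p:] [:q:] [:-q:] [:-p:]) (m2 ?X 0 0 ?X)"
    unfolding char_poly_matrix_def
    apply (rule eq_matI)
    by (auto simp: mat_of_rows_list_def numeral_eq_Suc less_Suc_eq)
  have "det (four_block_mat (m2 ?X 0 0 ?X) (m2 (-1) 0 0 (-1)) (m2 [:-p:] [:q:] [:-q:] [:-p:]) (m2 ?X 0 0 ?X))
    = det (m2 ?X 0 0 ?X * m2 ?X 0 0 ?X - m2 (-1) 0 0 (-1) * m2 [:-p:] [:q:] [:-q:] [:-p:])"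
    by (rule det_four_block_mat[OF m2_carrier m2_carrier m2_carrier m2_carrier])
      (simp add: m2_mult algebra_simps)
  also have "\<dots> = [:-p,0,1:] * [:-p,0,1:] + [:q:] * [:q:]"
    unfolding m2_mult m2_minus m2_det
    by (rule poly_ext) (simp add: algebra_simps)
  finally show ?thesis unfolding char_poly_def cpm .
qed


lemma csqrt_Re_pos: assumes "\<forall>s::real. z \<noteq> - complex_of_real (s^2)"
  shows "Re (csqrt z) > 0"
proof (rule ccontr)
  assume "\<not> Re (csqrt z) > 0"
  with Re_csqrt[of z] have r0: "Re (csqrt z) = 0" by simp
  have "csqrt z = \<i> * complex_of_real (Im (csqrt z))" using r0 by (simp add: complex_eq_iff)
  hence "z = (\<i> * complex_of_real (Im (csqrt z)))^2" by (metis power2_csqrt)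
  hence "z = - complex_of_real ((Im (csqrt z))^2)" by (simp add: power_mult_distrib)
  with assms show False by blast
qed

lemma link1: fixes b h l dl a S d :: complex
  assumes d0: "d \<noteq> 0" and dd: "d = b*b + h*h"
    and z: "((b*(l-dl) - h*a)/d) + \<i>*(-(b*a + h*(l-dl))/d) = -S"
  shows "l = dl + \<i>*a - S*(b + \<i>*h)"
proof -
  have f: "d = (b - \<i>*h) * (b + \<i>*h)" unfolding dd by (simp add: algebra_simps power2_eq_square[symmetric])
  have nz: "b - \<i>*h \<noteq> 0" using d0 f by auto
  have e: "((b*(l-dl) - h*a)/d) + \<i>*(-(b*a + h*(l-dl))/d) = (b*(l-dl) - h*a + \<i>*(-(b*a + h*(l-dl))))/d"
    using d0 by (simp add: field_simps)
  from z[unfolded e] d0 have "b*(l-dl) - h*a + \<i>*(-(b*a + h*(l-dl))) = -S * d"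
    by (simp add: nonzero_divide_eq_eq)
  hence "(b - \<i>*h) * (l - dl - \<i>*a) = (b - \<i>*h) * (-S*(b+\<i>*h))"
    unfolding f by (simp add: algebra_simps)
  hence "l - dl - \<i>*a = -S*(b+\<i>*h)" using mult_left_cancel[OF nz] by blast
  thus ?thesis by (simp add: algebra_simps)
qed

lemma link2: fixes b h l dl a S d :: complex
  assumes d0: "d \<noteq> 0" and dd: "d = b*b + h*h"
    and z: "((b*(l-dl) - h*a)/d) - \<i>*(-(b*a + h*(l-dl))/d) = -S"
  shows "l = dl - \<i>*a - S*(b - \<i>*h)"
proof -
  have f: "d = (b + \<i>*h) * (b - \<i>*h)" unfolding dd by (simp add: algebra_simps power2_eq_square[symmetric])
  have nz: "b + \<i>*h \<noteq> 0" using d0 f by auto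
  have e: "((b*(l-dl) - h*a)/d) - \<i>*(-(b*a + h*(l-dl))/d) = (b*(l-dl) - h*a - \<i>*(-(b*a + h*(l-dl))))/d"
    using d0 by (simp add: field_simps)
  from z[unfolded e] d0 have "b*(l-dl) - h*a - \<i>*(-(b*a + h*(l-dl))) = -S * d"
    by (simp add: nonzero_divide_eq_eq)
  hence "(b + \<i>*h) * (l - dl + \<i>*a) = (b + \<i>*h) * (-S*(b-\<i>*h))"
    unfolding f by (simp add: algebra_simps)
  hence "l - dl + \<i>*a = -S*(b-\<i>*h)" using mult_left_cancel[OF nz] by blast
  thus ?thesis by (simp add: algebra_simps)
qed

lemma factor4: fixes p q r1 r2 :: complex
  assumes "r1^2 = p + \<i>*q" "r2^2 = p - \<i>*q"
  shows "[:-p,0,1:] * [:-p,0,1:] + [:q:] * [:q:] = (\<Prod>e\<leftarrow>[r1,-r1,r2,-r2]. [:- e, 1:])"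
proof (rule poly_ext)
  fix x
  have a: "(x - r1)*(x+r1) = x*x - (p + \<i>*q)" using assms(1)[symmetric]
    by (simp add: power2_eq_square algebra_simps)
  have b: "(x - r2)*(x+r2) = x*x - (p - \<i>*q)" using assms(2)[symmetric]
    by (simp add: power2_eq_square algebra_simps)
  have "(x*x - p)*(x*x-p) + q*q = (x*x - (p + \<i>*q)) * (x*x - (p - \<i>*q))"
  proof -
    have "(x*x - (p + \<i>*q)) * (x*x - (p - \<i>*q)) = (x*x - p)*(x*x-p) - (\<i>*\<i>)*(q*q)"
      by (simp add: algebra_simps)
    thus ?thesis by simp
  qed
  also have "\<dots> = ((x - r1)*(x+r1)) * ((x - r2)*(x+r2))" by (simp add: a b)
  finally have eq: "(x*x - p)*(x*x-p) + q*q = ((x - r1)*(x+r1)) * ((x - r2)*(x+r2))" .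
  show "poly ([:-p,0,1:] * [:-p,0,1:] + [:q:] * [:q:]) x = poly (\<Prod>e\<leftarrow>[r1,-r1,r2,-r2]. [:- e, 1:]) x"
  proof -
    have l: "poly ([:-p,0,1:] * [:-p,0,1:] + [:q:] * [:q:]) x = (x*x - p)*(x*x-p) + q*q"
      by (simp add: algebra_simps)
    have r: "poly (\<Prod>e\<leftarrow>[r1,-r1,r2,-r2]. [:- e, 1:]) x = ((x - r1)*(x+r1)) * ((x - r2)*(x+r2))"
      by (simp add: algebra_simps)
    show ?thesis unfolding l r eq ..
  qed
qed


theorem proposition4p3:
  fixes D \<beta> \<delta> \<alpha> :: real and lam :: complex
  assumes "(\<beta>, D) \<noteq> (0, 0)"
    and "lam \<notin> sigma_ess D \<beta> \<delta> \<alpha>"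
  shows "\<exists>es :: complex list. length es = 4 \<and>
           char_poly (A_inf D \<beta> \<delta> \<alpha> lam) = (\<Prod>e\<leftarrow>es. [:- e, 1:]) \<and>
           length (filter (\<lambda>e. Re e > 0) es) = 2 \<and>
           length (filter (\<lambda>e. Re e < 0) es) = 2"
proof -
  define d where "d = complex_of_real (\<beta>^2 + (D/2)^2)"
  define p where "p = (of_real \<beta> * (lam - of_real \<delta>) - of_real (D/2) * of_real \<alpha>) / d"
  define q where "q = - (of_real \<beta> * of_real \<alpha> + of_real (D/2) * (lam - of_real \<delta>)) / d"
  have "\<beta>^2 + (D/2)^2 > 0" using assms(1)
    by (cases "\<beta> = 0") (auto simp: add_pos_nonneg)
  hence d0: "d \<noteq> 0" unfolding d_def by (metis of_real_eq_0_iff order_less_irrefl)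
  have dd: "d = of_real \<beta> * of_real \<beta> + of_real (D/2) * of_real (D/2)" unfolding d_def
    by (simp add: power2_eq_square)
  have A: "A_inf D \<beta> \<delta> \<alpha> lam = four_block_mat (0\<^sub>m 2 2) (1\<^sub>m 2) (m2 p (-q) q p) (0\<^sub>m 2 2)"
    using step1[OF assms(1), of \<delta> \<alpha> lam] unfolding p_def q_def d_def .
  have cp: "char_poly (A_inf D \<beta> \<delta> \<alpha> lam) = [:-p,0,1:] * [:-p,0,1:] + [:q:] * [:q:]"
    unfolding A by (rule step2)
  have n1: "\<forall>s::real. p + \<i>*q \<noteq> - complex_of_real (s^2)"
  proof (intro allI notI)
    fix s :: real assume "p + \<i>*q = - complex_of_real (s^2)"
    hence "lam = of_real \<delta> + \<i> * of_real \<alpha> - of_real (s^2) * (of_real \<beta> + \<i> * of_real (D/2))"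
      by (intro link1[OF d0 dd]) (simp add: p_def q_def)
    hence "lam \<in> sigma_ess D \<beta> \<delta> \<alpha>" unfolding sigma_ess_def
      by (auto simp: Complex_eq)
    with assms(2) show False by blast
  qed
  have n2: "\<forall>s::real. p - \<i>*q \<noteq> - complex_of_real (s^2)"
  proof (intro allI notI)
    fix s :: real assume "p - \<i>*q = - complex_of_real (s^2)"
    hence "lam = of_real \<delta> - \<i> * of_real \<alpha> - of_real (s^2) * (of_real \<beta> - \<i> * of_real (D/2))"
      by (intro link2[OF d0 dd]) (simp add: p_def q_def)
    hence "lam \<in> sigma_ess D \<beta> \<delta> \<alpha>" unfolding sigma_ess_def
      by (auto simp: Complex_eq)
    with assms(2) show False by blast
  qed
  define r1 where "r1 = csqrt (p + \<i>*q)"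
  define r2 where "r2 = csqrt (p - \<i>*q)"
  have R1: "Re r1 > 0" unfolding r1_def by (rule csqrt_Re_pos[OF n1])
  have R2: "Re r2 > 0" unfolding r2_def by (rule csqrt_Re_pos[OF n2])
  have F: "char_poly (A_inf D \<beta> \<delta> \<alpha> lam) = (\<Prod>e\<leftarrow>[r1,-r1,r2,-r2]. [:- e, 1:])"
    unfolding cp by (rule factor4) (simp_all add: r1_def r2_def)
  show ?thesis
    by (rule exI[of _ "[r1,-r1,r2,-r2]"]) (use F R1 R2 in simp)
qed

end
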